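(* Let $I$ be an index set and $P_r,Q_r\in GL(n,\mathbb C)$ for $r\in I$. There exists a biholomorphic map $f\colon\mathbb C^n\to\mathbb C^n$ with $f(P_rw)=Q_rf(w)$ for all $w\in\mathbb C^n$, $r\in I$, if and only if there exists $C\in GL(n,\mathbb C)$ with $CP_r=Q_rC$ for all $r\in I$. *)

theory Defs
  imports "HOL-Analysis.Analysis"
begin

text \<open>Holomorphic maps C^n -> C^n: Frechet differentiable at every point with a
complex-linear derivative (given by a complex n x n matrix).\<close>
definition holomorphic_Cn :: "(complex ^ 'n \<Rightarrow> complex ^ 'm) \<Rightarrow> bool" where
  "holomorphic_Cn f \<longleftrightarrow>
     (\<forall>z. \<exists>L :: complex ^ 'n ^ 'm. (f has_derivative (\<lambda>h. L *v h)) (at z))"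

definition biholomorphic_Cn :: "(complex ^ 'n \<Rightarrow> complex ^ 'n) \<Rightarrow> bool" where
  "biholomorphic_Cn f \<longleftrightarrow>
     (\<exists>g. holomorphic_Cn f \<and> holomorphic_Cn g \<and> (\<forall>z. g (f z) = z) \<and> (\<forall>z. f (g z) = z))"

end

theory Submission
  imports Defs
begin

lemma lin_deriv: "((\<lambda>h. (A::complex^'n^'m) *v h) has_derivative (\<lambda>h. A *v h)) F"
  using bounded_linear_imp_has_derivative[OF matrix_vector_mul_bounded_linear[of A]] by simp

theorem theorem3p5:
  fixes I :: "'i set"
    and P Q :: "'i \<Rightarrow> complex ^ 'n ^ 'n"
  assumes "\<forall>r\<in>I. invertible (P r)"
    and "\<forall>r\<in>I. invertible (Q r)"
  shows "(\<exists>f :: complex ^ 'n \<Rightarrow> complex ^ 'n. biholomorphic_Cn f \<and>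
            (\<forall>w. \<forall>r\<in>I. f (P r *v w) = Q r *v f w))
         \<longleftrightarrow> (\<exists>C :: complex ^ 'n ^ 'n. invertible C \<and> (\<forall>r\<in>I. C ** P r = Q r ** C))"
proof
  assume "\<exists>f :: complex ^ 'n \<Rightarrow> complex ^ 'n. biholomorphic_Cn f \<and>
            (\<forall>w. \<forall>r\<in>I. f (P r *v w) = Q r *v f w)"
  then obtain f g where hf: "holomorphic_Cn f" and hg: "holomorphic_Cn g"
    and gf: "\<forall>z. g (f z) = z" and fg: "\<forall>z. f (g z) = z"
    and eq: "\<forall>w. \<forall>r\<in>I. f (P r *v w) = Q r *v f w"
    unfolding biholomorphic_Cn_def by blast
  obtain L :: "complex^'n^'n" where L: "(f has_derivative (\<lambda>h. L *v h)) (at 0)"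
    using hf unfolding holomorphic_Cn_def by blast
  obtain M :: "complex^'n^'n" where M: "(g has_derivative (\<lambda>h. M *v h)) (at (f 0))"
    using hg unfolding holomorphic_Cn_def by blast
  have g0: "g (f 0) = 0" using gf by simp
  have c1: "((g \<circ> f) has_derivative (\<lambda>h. M *v (L *v h))) (at 0)"
    using diff_chain_at[OF L M] by (simp add: o_def)
  have gfid: "g \<circ> f = (\<lambda>x. x)" using gf by auto
  have idd: "((\<lambda>x::complex^'n. x) has_derivative (\<lambda>h. h)) (at 0)" by (rule has_derivative_ident)
  have "(\<lambda>h. M *v (L *v h)) = (\<lambda>h. h)"
    using has_derivative_unique[OF c1[unfolded gfid] idd] .
  hence hML: "M ** L = mat 1"
    by (metis matrix_eq matrix_vector_mul_assoc matrix_vector_mul_lid)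
  have L2: "(f has_derivative (\<lambda>h. L *v h)) (at (g (f 0)))" using L g0 by simp
  have c2: "((f \<circ> g) has_derivative (\<lambda>h. L *v (M *v h))) (at (f 0))"
    using diff_chain_at[OF M L2] by (simp add: o_def)
  have fgid: "f \<circ> g = (\<lambda>x. x)" using fg by auto
  have "(\<lambda>h. L *v (M *v h)) = (\<lambda>h. h)"
    using has_derivative_unique[OF c2[unfolded fgid] has_derivative_ident] .
  hence hLM: "L ** M = mat 1"
    by (metis matrix_eq matrix_vector_mul_assoc matrix_vector_mul_lid)
  have inv: "invertible L" unfolding invertible_def using hML hLM by blast
  have "\<forall>r\<in>I. L ** P r = Q r ** L"
  proof
    fix r assume r: "r \<in> I"
    have fe: "(\<lambda>w. f (P r *v w)) = (\<lambda>w. Q r *v f w)" using eq r by auto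
    have L3: "(f has_derivative (\<lambda>h. L *v h)) (at (P r *v 0))" using L by simp
    have d1: "((\<lambda>w. f (P r *v w)) has_derivative (\<lambda>h. L *v (P r *v h))) (at 0)"
      using diff_chain_at[OF lin_deriv L3] by (simp add: o_def)
    have d2: "((\<lambda>w. Q r *v f w) has_derivative (\<lambda>h. Q r *v (L *v h))) (at 0)"
      using diff_chain_at[OF L lin_deriv] by (simp add: o_def)
    have "(\<lambda>h. L *v (P r *v h)) = (\<lambda>h. Q r *v (L *v h))"
      using has_derivative_unique[OF d1[unfolded fe] d2] .
    thus "L ** P r = Q r ** L"
      by (metis matrix_eq matrix_vector_mul_assoc)
  qed
  with inv show "\<exists>C :: complex ^ 'n ^ 'n. invertible C \<and> (\<forall>r\<in>I. C ** P r = Q r ** C)" by blast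
next
  assume "\<exists>C :: complex ^ 'n ^ 'n. invertible C \<and> (\<forall>r\<in>I. C ** P r = Q r ** C)"
  then obtain C :: "complex^'n^'n" where C: "invertible C" and cm: "\<forall>r\<in>I. C ** P r = Q r ** C"
    by blast
  obtain D where CD: "C ** D = mat 1" and DC: "D ** C = mat 1"
    using C unfolding invertible_def by blast
  have "biholomorphic_Cn (\<lambda>w. C *v w)"
    unfolding biholomorphic_Cn_def holomorphic_Cn_def
    apply (rule exI[of _ "\<lambda>w. D *v w"])
    using lin_deriv by (auto simp: matrix_vector_mul_assoc CD DC)
  moreover have "\<forall>w. \<forall>r\<in>I. C *v (P r *v w) = Q r *v (C *v w)"
    using cm by (simp add: matrix_vector_mul_assoc)
  ultimately show "\<exists>f :: complex ^ 'n \<Rightarrow> complex ^ 'n. biholomorphic_Cn f \<and>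
            (\<forall>w. \<forall>r\<in>I. f (P r *v w) = Q r *v f w)" by blast
qed

end
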